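(* Let $\|\cdot\|$ be a norm on $\mathbb{R}^d$ with dual norm $\|z\|_*=\max_{\|u\|\le1}\langle u,z\rangle$, let $\Phi$ be a mirror map whose Bregman divergence satisfies $\frac{m}{2}\|x-y\|^2\le D_\Phi(x,y)\le\frac{M}{2}\|x-y\|^2$ for constants $0<m\le M$, and let $f_t$ be a convex function on the convex set $\mathcal{X}$, with $\Phi$ and $f_t$ continuously differentiable on $\mathcal{X}$. Fix a point $x_{t-1}$ and, for $K_l=\{x: f_t(x)\le l\}$, let $x(l)=\Pi^\Phi_{K_l}(x_{t-1})$. Then the function $$h(l)=\frac{\|\nabla\Phi(x_{t-1})-\nabla\Phi(x(l))\|_*}{\|\nabla f_t(x(l))\|_*}$$ is continuous in $l$.
   Context: For a convex function $\Phi$, the Bregman divergence is $D_\Phi(x,y)=\Phi(x)-\Phi(y)-\nabla\Phi(y)^T(x-y)$, and the Bregman projection of $x$ onto a convex set $K$ is $\Pi^\Phi_K(x)=\arg\min_{y\in K}D_\Phi(y,x)$. *)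

theory Defs
  imports "HOL-Analysis.Analysis"
begin

definition is_norm :: "('a::euclidean_space \<Rightarrow> real) \<Rightarrow> bool" where
  "is_norm N \<longleftrightarrow>
     (\<forall>x. 0 \<le> N x) \<and> (\<forall>x. N x = 0 \<longleftrightarrow> x = 0) \<and>
     (\<forall>c x. N (c *\<^sub>R x) = \<bar>c\<bar> * N x) \<and>
     (\<forall>x y. N (x + y) \<le> N x + N y)"

text \<open>Dual norm: the supremum (attained, i.e. a maximum) of the inner product over the unit ball.\<close>
definition dual_norm :: "('a::euclidean_space \<Rightarrow> real) \<Rightarrow> 'a \<Rightarrow> real" where
  "dual_norm N z = Sup {u \<bullet> z | u. N u \<le> 1}"

definition bregman :: "('a::euclidean_space \<Rightarrow> real) \<Rightarrow> ('a \<Rightarrow> 'a) \<Rightarrow> 'a \<Rightarrow> 'a \<Rightarrow> real" where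
  "bregman Phi gPhi x y = Phi x - Phi y - gPhi y \<bullet> (x - y)"

definition bregman_proj :: "('a::euclidean_space \<Rightarrow> real) \<Rightarrow> ('a \<Rightarrow> 'a) \<Rightarrow> 'a set \<Rightarrow> 'a \<Rightarrow> 'a" where
  "bregman_proj Phi gPhi K x = (ARG_MIN (\<lambda>y. bregman Phi gPhi y x) y. y \<in> K)"

end

theory Submission
  imports Defs
begin

lemma isnorm_basic:
  assumes "is_norm N"
  shows "N 0 = 0" "N (- x) = N x" "N (x + y) \<le> N x + N y" "0 \<le> N x"
    "N (c *\<^sub>R x) = \<bar>c\<bar> * N x" "N (x - y) = N (y - x)"
proof -
  show "N 0 = 0" using assms unfolding is_norm_def by auto
  show neg: "N (- x) = N x" for x using assms unfolding is_norm_def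
    by (metis abs_minus_cancel abs_one mult_cancel_right1 scaleR_minus1_left)
  show "N (x + y) \<le> N x + N y" "0 \<le> N x" "N (c *\<^sub>R x) = \<bar>c\<bar> * N x"
    using assms unfolding is_norm_def by auto
  show "N (x - y) = N (y - x)" using neg[of "y - x"] by simp
qed

lemma isnorm_sum:
  assumes "is_norm N" "finite A"
  shows "N (\<Sum>i\<in>A. h i) \<le> (\<Sum>i\<in>A. N (h i))"
  using assms(2)
proof (induction A rule: finite_induct)
  case empty then show ?case using isnorm_basic[OF assms(1)] by simp
next
  case (insert a A)
  then show ?case using isnorm_basic(3)[OF assms(1), of "h a" "sum h A"] by simp
qed

lemma isnorm_upper:
  fixes N :: "'a::euclidean_space \<Rightarrow> real"
  assumes "is_norm N"
  shows "N x \<le> (\<Sum>b\<in>Basis. N b) * norm x"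
proof -
  have "N x = N (\<Sum>b\<in>Basis. (x \<bullet> b) *\<^sub>R b)" by (simp add: euclidean_representation)
  also have "\<dots> \<le> (\<Sum>b\<in>Basis. N ((x \<bullet> b) *\<^sub>R b))" by (rule isnorm_sum[OF assms]) simp
  also have "\<dots> = (\<Sum>b\<in>Basis. \<bar>x \<bullet> b\<bar> * N b)" using isnorm_basic(5)[OF assms] by simp
  also have "\<dots> \<le> (\<Sum>b\<in>Basis. norm x * N b)"
    apply (rule sum_mono) apply (rule mult_right_mono)
    using Basis_le_norm isnorm_basic(4)[OF assms] by auto
  finally show ?thesis by (simp add: sum_distrib_left mult.commute)
qed

lemma isnorm_cont:
  fixes N :: "'a::euclidean_space \<Rightarrow> real"
  assumes "is_norm N"
  shows "continuous_on S N"
proof -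
  define C where "C = (\<Sum>b\<in>Basis. N b) + 1"
  have C: "C > 0" unfolding C_def using isnorm_basic(4)[OF assms] by (simp add: sum_nonneg add_nonneg_pos)
  have L: "\<bar>N x - N y\<bar> \<le> C * dist x y" for x y
  proof -
    have "N x \<le> N y + N (x - y)" using isnorm_basic(3)[OF assms, of y "x - y"] by simp
    moreover have "N y \<le> N x + N (y - x)" using isnorm_basic(3)[OF assms, of x "y - x"] by simp
    moreover have "N (x - y) \<le> C * dist x y" "N (y - x) \<le> C * dist x y"
      using isnorm_upper[OF assms, of "x - y"] isnorm_upper[OF assms, of "y - x"]
      apply (auto simp: C_def dist_norm norm_minus_commute distrib_right)
      using norm_ge_zero[of "x - y"] by linarith+
    ultimately show ?thesis by linarith
  qed
  show ?thesis unfolding continuous_on_iff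
  proof (intro ballI allI impI)
    fix x e assume "x \<in> S" "(0::real) < e"
    show "\<exists>d>0. \<forall>x'\<in>S. dist x' x < d \<longrightarrow> dist (N x') (N x) < e"
      apply (rule exI[of _ "e / C"]) using C \<open>0 < e\<close> L
      by (auto simp: dist_real_def field_simps) (smt (verit) mult.commute)
  qed
qed

lemma isnorm_lower:
  fixes N :: "'a::euclidean_space \<Rightarrow> real"
  assumes "is_norm N"
  shows "\<exists>c>0. \<forall>x. c * norm x \<le> N x"
proof -
  obtain b :: 'a where b: "b \<in> Basis" using nonempty_Basis by blast
  have ne: "sphere (0::'a) 1 \<noteq> {}" using b by (auto simp: norm_Basis)
  obtain p where p: "p \<in> sphere 0 1" "\<forall>y\<in>sphere 0 1. N p \<le> N y"
    using continuous_attains_inf[OF compact_sphere ne isnorm_cont[OF assms]] by blast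
  have "p \<noteq> 0" using p by auto
  then have pos: "N p > 0" using assms unfolding is_norm_def by (metis less_eq_real_def)
  show ?thesis
  proof (intro exI conjI allI)
    show "N p > 0" by fact
    fix x :: 'a
    show "N p * norm x \<le> N x"
    proof (cases "x = 0")
      case True then show ?thesis using isnorm_basic[OF assms] by simp
    next
      case False
      then have "N p \<le> N ((1 / norm x) *\<^sub>R x)" using p by auto
      also have "\<dots> = N x / norm x" using isnorm_basic(5)[OF assms] by simp
      finally show ?thesis using False by (simp add: field_simps)
    qed
  qed
qed


lemma dual_norm_props:
  fixes N :: "'a::euclidean_space \<Rightarrow> real"
  assumes "is_norm N"
  shows "\<And>z. z \<noteq> 0 \<Longrightarrow> dual_norm N z > 0" "continuous_on S (dual_norm N)"
proof -
  obtain c where c: "c > 0" "\<And>x. c * norm x \<le> N x" using isnorm_lower[OF assms] by blast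
  define U where "U z = {u \<bullet> z | u. N u \<le> 1}" for z
  have nU: "U z \<noteq> {}" for z
  proof -
    have "(0::'a) \<bullet> z \<in> U z" unfolding U_def using isnorm_basic(1)[OF assms]
      by (intro CollectI exI[of _ 0]) simp
    then show ?thesis by blast
  qed
  have bU: "t \<le> norm z / c" if tU: "t \<in> U z" for t z
  proof -
    obtain u where u: "t = u \<bullet> z" "N u \<le> 1" using tU unfolding U_def by blast
    have "norm u \<le> 1 / c" using c(2)[of u] u(2) c(1) by (simp add: field_simps)
    then have "u \<bullet> z \<le> (1 / c) * norm z"
    proof -
      have "u \<bullet> z \<le> norm u * norm z" by (rule order_trans[OF abs_ge_self Cauchy_Schwarz_ineq2])
      also have "\<dots> \<le> (1 / c) * norm z" by (rule mult_right_mono) (fact, simp)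
      finally show ?thesis .
    qed
    then show ?thesis using u by simp
  qed
  have bdd: "bdd_above (U z)" for z using bU unfolding bdd_above_def by blast
  have dn: "dual_norm N z = Sup (U z)" for z unfolding dual_norm_def U_def by simp
  show "dual_norm N z > 0" if "z \<noteq> 0" for z
  proof -
    have Nz: "N z > 0" using that assms unfolding is_norm_def by (metis less_eq_real_def)
    have "N ((1 / N z) *\<^sub>R z) = 1" using isnorm_basic(5)[OF assms] Nz by simp
    then have "((1 / N z) *\<^sub>R z) \<bullet> z \<in> U z" unfolding U_def
      by (intro CollectI exI[of _ "(1 / N z) *\<^sub>R z"]) simp
    then have "((1 / N z) *\<^sub>R z) \<bullet> z \<le> dual_norm N z" unfolding dn by (rule cSup_upper[OF _ bdd])
    moreover have "((1 / N z) *\<^sub>R z) \<bullet> z > 0" using Nz that by simp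
    ultimately show ?thesis by linarith
  qed
  have L: "dual_norm N z \<le> dual_norm N w + norm (z - w) / c" for z w
    unfolding dn
  proof (rule cSup_least[OF nU])
    fix t assume "t \<in> U z"
    then obtain u where u: "t = u \<bullet> z" "N u \<le> 1" unfolding U_def by blast
    have "u \<bullet> w \<in> U w" using u unfolding U_def by blast
    then have "u \<bullet> w \<le> Sup (U w)" by (rule cSup_upper[OF _ bdd])
    moreover have "u \<bullet> (z - w) \<le> norm (z - w) / c" using bU[of "u \<bullet> (z - w)" "z - w"] u unfolding U_def by blast
    ultimately show "t \<le> Sup (U w) + norm (z - w) / c" using u by (simp add: inner_diff_right)
  qed
  show "continuous_on S (dual_norm N)" unfolding continuous_on_iff
  proof (intro ballI allI impI)
    fix x e assume "x \<in> S" "(0::real) < e"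
    show "\<exists>d>0. \<forall>x'\<in>S. dist x' x < d \<longrightarrow> dist (dual_norm N x') (dual_norm N x) < e"
    proof (rule exI[of _ "e * c"], intro conjI ballI impI)
      show "e * c > 0" using c \<open>0 < e\<close> by simp
      fix x' assume "dist x' x < e * c"
      then have "norm (x' - x) / c < e" "norm (x - x') / c < e" using c(1)
        by (auto simp: dist_norm norm_minus_commute field_simps)
      then show "dist (dual_norm N x') (dual_norm N x) < e"
        using L[of x' x] L[of x x'] by (auto simp: dist_real_def)
    qed
  qed
qed



lemma convex_tangent:
  fixes f :: "'a::euclidean_space \<Rightarrow> real"
  assumes cv: "convex_on X f" and xy: "x \<in> X" "y \<in> X"
    and der: "(f has_derivative (\<lambda>v. g \<bullet> v)) (at x)"
  shows "f x + g \<bullet> (y - x) \<le> f y"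
proof (rule ccontr)
  assume "\<not> ?thesis"
  then have pos: "0 < g \<bullet> (y - x) - (f y - f x)" by simp
  have l: "((\<lambda>t. x + t *\<^sub>R (y - x)) has_derivative (\<lambda>t. t *\<^sub>R (y - x))) (at (0::real))"
    by (auto intro!: derivative_eq_intros)
  have der': "(f has_derivative (\<lambda>v. g \<bullet> v)) (at (x + 0 *\<^sub>R (y - x)))" using der by simp
  have c: "((\<lambda>t. f (x + t *\<^sub>R (y - x))) has_derivative (\<lambda>t. g \<bullet> (t *\<^sub>R (y - x)))) (at (0::real))"
    using has_derivative_compose[OF l der'] by simp
  have "((\<lambda>t. f (x + t *\<^sub>R (y - x)) - t * (f y - f x)) has_derivative
        (\<lambda>t. g \<bullet> (t *\<^sub>R (y - x)) - t * (f y - f x))) (at (0::real))"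
    by (intro has_derivative_diff c derivative_eq_intros) auto
  then have "DERIV (\<lambda>t. f (x + t *\<^sub>R (y - x)) - t * (f y - f x)) 0 :> (g \<bullet> (y - x) - (f y - f x))"
    unfolding has_field_derivative_def
    by (rule has_derivative_eq_rhs) (auto simp: algebra_simps fun_eq_iff)
  from DERIV_pos_inc_right[OF this pos] obtain d where d: "d > 0"
    "\<And>h. h > 0 \<Longrightarrow> h < d \<Longrightarrow> f x < f (x + h *\<^sub>R (y - x)) - h * (f y - f x)" by auto
  define h where "h = min (d / 2) (1 / 2)"
  have h: "h > 0" "h < d" "h \<le> 1" using d(1) by (auto simp: h_def)
  have "f x < f (x + h *\<^sub>R (y - x)) - h * (f y - f x)" using d(2) h by simp
  moreover have "f ((1 - h) *\<^sub>R x + h *\<^sub>R y) \<le> (1 - h) * f x + h * f y"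
    using convex_onD[OF cv, of h x y] h xy by simp
  moreover have "(1 - h) *\<^sub>R x + h *\<^sub>R y = x + h *\<^sub>R (y - x)" by (simp add: algebra_simps)
  ultimately show False by (simp add: algebra_simps)
qed


theorem lemma5:
  fixes N :: "'a::euclidean_space \<Rightarrow> real"
    and Phi f :: "'a \<Rightarrow> real"
    and gPhi gf :: "'a \<Rightarrow> 'a"
    and X :: "'a set"
    and x0 :: 'a
    and m M :: real
  assumes norm: "is_norm N"
    and mM: "0 < m" "m \<le> M"
    and breg_bounds: "\<And>x y. x \<in> X \<Longrightarrow> y \<in> X \<Longrightarrow>
           m / 2 * (N (x - y))\<^sup>2 \<le> bregman Phi gPhi x y \<and>
           bregman Phi gPhi x y \<le> M / 2 * (N (x - y))\<^sup>2"
    and X_convex: "convex X" and X_closed: "closed X"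
    and f_convex: "convex_on X f"
    and Phi_deriv: "\<And>x. x \<in> X \<Longrightarrow> (Phi has_derivative (\<lambda>v. gPhi x \<bullet> v)) (at x)"
    and gPhi_cont: "continuous_on X gPhi"
    and f_deriv: "\<And>x. x \<in> X \<Longrightarrow> (f has_derivative (\<lambda>v. gf x \<bullet> v)) (at x)"
    and gf_cont: "continuous_on X gf"
    and x0_in: "x0 \<in> X"
  defines "xl \<equiv> (\<lambda>l. bregman_proj Phi gPhi {x \<in> X. f x \<le> l} x0)"
  shows "continuous_on {l. \<exists>x\<in>X. f x < l}
           (\<lambda>l. dual_norm N (gPhi x0 - gPhi (xl l)) / dual_norm N (gf (xl l)))"
proof -
  obtain c where c: "c > 0" "\<And>x. c * norm x \<le> N x" using isnorm_lower[OF norm] by blast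
  define g where "g y = bregman Phi gPhi y x0" for y
  define K where "K l = {x \<in> X. f x \<le> l}" for l
  define S where "S = {l. \<exists>x\<in>X. f x < l}"
  have xl_eq: "xl l = arg_min g (\<lambda>y. y \<in> K l)" for l
    unfolding xl_def bregman_proj_def g_def K_def by simp
  have Phic: "continuous_on X Phi"
    using Phi_deriv by (meson continuous_at_imp_continuous_on has_derivative_continuous)
  have fc: "continuous_on X f"
    using f_deriv by (meson continuous_at_imp_continuous_on has_derivative_continuous)
  have gc: "continuous_on X g" unfolding g_def bregman_def
    by (intro continuous_intros Phic)
  have g_lower: "m / 2 * (N (y - x0))\<^sup>2 \<le> g y" if "y \<in> X" for y
    using breg_bounds[OF that x0_in] unfolding g_def by simp
  have g0: "g x0 = 0" by (simp add: g_def bregman_def)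
  have Nsym: "N (a - b) = N (b - a)" for a b using isnorm_basic(6)[OF norm] .
  have SC: "g ((1 - t) *\<^sub>R p + t *\<^sub>R y) \<le> (1 - t) * g p + t * g y - m / 2 * t * (1 - t) * (N (y - p))\<^sup>2"
    if p: "p \<in> X" and y: "y \<in> X" and t: "0 \<le> t" "t \<le> 1" for p y t
  proof -
    define z where "z = (1 - t) *\<^sub>R p + t *\<^sub>R y"
    have zX: "z \<in> X" unfolding z_def using convexD[OF X_convex p y] t by simp
    define n where "n = N (y - p)"
    define a where "a = gPhi z \<bullet> (p - y)"
    have pz: "p - z = t *\<^sub>R (p - y)" "y - z = (1 - t) *\<^sub>R (y - p)"
      unfolding z_def by (simp_all add: algebra_simps)
    have Npz: "N (p - z) = t * n" "N (y - z) = (1 - t) * n"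
      unfolding pz n_def using isnorm_basic(5)[OF norm] Nsym t by auto
    have ipz: "gPhi z \<bullet> (p - z) = t * a" "gPhi z \<bullet> (y - z) = - ((1 - t) * a)"
      unfolding pz a_def by (simp_all add: inner_diff_right algebra_simps)
    have b1: "m / 2 * (t * n)\<^sup>2 \<le> Phi p - Phi z - t * a"
      using conjunct1[OF breg_bounds[OF p zX]] Npz ipz unfolding bregman_def by simp
    have b2: "m / 2 * ((1 - t) * n)\<^sup>2 \<le> Phi y - Phi z + (1 - t) * a"
      using conjunct1[OF breg_bounds[OF y zX]] Npz ipz unfolding bregman_def by simp
    have c1: "(1 - t) * (m / 2 * (t * n)\<^sup>2) \<le> (1 - t) * (Phi p - Phi z - t * a)"
      using b1 t by (intro mult_left_mono) auto
    have c2: "t * (m / 2 * ((1 - t) * n)\<^sup>2) \<le> t * (Phi y - Phi z + (1 - t) * a)"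
      using b2 t by (intro mult_left_mono) auto
    have e1: "(1 - t) * (m / 2 * (t * n)\<^sup>2) + t * (m / 2 * ((1 - t) * n)\<^sup>2) = m / 2 * t * (1 - t) * n\<^sup>2"
      by (simp add: power2_eq_square field_simps)
    have e2: "(1 - t) * (Phi p - Phi z - t * a) + t * (Phi y - Phi z + (1 - t) * a)
        = (1 - t) * Phi p + t * Phi y - Phi z"
      by (simp add: algebra_simps)
    have PhiSC: "Phi z \<le> (1 - t) * Phi p + t * Phi y - m / 2 * t * (1 - t) * n\<^sup>2"
      using c1 c2 e1 e2 by linarith
    have lin: "gPhi x0 \<bullet> (z - x0) = (1 - t) * (gPhi x0 \<bullet> (p - x0)) + t * (gPhi x0 \<bullet> (y - x0))"
      unfolding z_def by (simp add: inner_diff_right inner_add_right algebra_simps)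
    show ?thesis using PhiSC lin unfolding g_def bregman_def z_def[symmetric] n_def
      by (simp add: algebra_simps)
  qed
  have ex: "xl l \<in> K l \<and> (\<forall>y\<in>K l. g (xl l) \<le> g y)" if lS: "l \<in> S" for l
  proof -
    obtain y0 where y0: "y0 \<in> X" "f y0 < l" using lS unfolding S_def by blast
    define A where "A = (X \<inter> f -` {..l}) \<inter> (X \<inter> g -` {..g y0})"
    have cA: "closed A" unfolding A_def
      by (intro closed_Int continuous_closed_preimage fc gc X_closed closed_atMost)
    define R where "R = (1 + 2 * g y0 / m) / c"
    have "A \<subseteq> cball x0 R"
    proof
      fix y assume yA: "y \<in> A"
      then have yX: "y \<in> X" and gy: "g y \<le> g y0" unfolding A_def by auto
      have "m / 2 * (N (y - x0))\<^sup>2 \<le> g y0" using g_lower[OF yX] gy by linarith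
      then have "(N (y - x0))\<^sup>2 \<le> 2 * g y0 / m" using mM(1) by (simp add: field_simps)
      moreover have "N (y - x0) \<le> 1 + (N (y - x0))\<^sup>2"
      proof -
        have "0 \<le> (N (y - x0) - 1/2)\<^sup>2" by simp
        then show ?thesis unfolding power2_eq_square by (simp add: algebra_simps)
      qed
      ultimately have "c * norm (y - x0) \<le> 1 + 2 * g y0 / m" using c(2)[of "y - x0"] by linarith
      then have "norm (y - x0) \<le> R" unfolding R_def using c(1) by (simp add: field_simps)
      then show "y \<in> cball x0 R" by (simp add: dist_norm norm_minus_commute)
    qed
    then have "compact A" using cA by (meson bounded_cball bounded_subset compact_eq_bounded_closed)
    moreover have "y0 \<in> A" unfolding A_def using y0 by auto
    ultimately obtain p where p: "p \<in> A" "\<forall>y\<in>A. g p \<le> g y"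
      using continuous_attains_inf[of A g] continuous_on_subset[OF gc, of A] unfolding A_def by blast
    have pK: "p \<in> K l" using p(1) unfolding A_def K_def by auto
    have pmin: "\<forall>y\<in>K l. g p \<le> g y"
    proof
      fix y assume yK: "y \<in> K l"
      show "g p \<le> g y"
      proof (cases "g y \<le> g y0")
        case True then have "y \<in> A" using yK unfolding A_def K_def by auto
        then show ?thesis using p(2) by blast
      next
        case False
        moreover have "g p \<le> g y0" using p(2) \<open>y0 \<in> A\<close> by blast
        ultimately show ?thesis by linarith
      qed
    qed
    show ?thesis unfolding xl_eq
      by (rule arg_minI[of "\<lambda>y. y \<in> K l" p g]) (use pK pmin in \<open>auto simp: not_less\<close>)
  qed
  have Q: "g (xl l) + m / 4 * (N (y - xl l))\<^sup>2 \<le> g y" if lS: "l \<in> S" and yK: "y \<in> K l" for l y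
  proof -
    define p where "p = xl l"
    have pK: "p \<in> K l" and pmin: "\<forall>y\<in>K l. g p \<le> g y" using ex[OF lS] unfolding p_def by auto
    have pX: "p \<in> X" and yX: "y \<in> X" using pK yK unfolding K_def by auto
    define z where "z = (1 - 1/2) *\<^sub>R p + (1/2) *\<^sub>R y"
    have zX: "z \<in> X" unfolding z_def by (rule convexD[OF X_convex pX yX]) auto
    have "f z \<le> (1 - 1/2) * f p + (1/2) * f y" unfolding z_def
      by (rule convex_onD[OF f_convex]) (use pX yX in auto)
    also have "\<dots> \<le> l" using pK yK unfolding K_def by auto
    finally have "z \<in> K l" using zX unfolding K_def by auto
    then have "g p \<le> g z" using pmin by blast
    also have "g z \<le> (1 - 1/2) * g p + (1/2) * g y - m / 2 * (1/2) * (1 - 1/2) * (N (y - p))\<^sup>2"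
      unfolding z_def by (rule SC[OF pX yX]) auto
    finally show ?thesis unfolding p_def[symmetric] by simp
  qed
  have xlX: "xl l \<in> X" if "l \<in> S" for l using ex[OF that] unfolding K_def by auto
  have S_up: "b \<in> S" if "a \<in> S" "a \<le> b" for a b using that unfolding S_def by force
  have S_open: "open S"
  proof -
    have "S = (\<Union>x\<in>X. {f x<..})" unfolding S_def by auto
    then show ?thesis by (simp add: open_UN)
  qed
  have S_conv: "convex S" unfolding convex_def
  proof (intro ballI allI impI)
    fix a b u v :: real assume ab: "a \<in> S" "b \<in> S" and uv: "0 \<le> u" "0 \<le> v" "u + v = 1"
    have "min a b \<le> u *\<^sub>R a + v *\<^sub>R b"
    proof -
      have "u * min a b \<le> u * a" "v * min a b \<le> v * b" using uv by (auto intro: mult_left_mono)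
      then have "(u + v) * min a b \<le> u * a + v * b" by (simp add: distrib_right)
      then show ?thesis using uv by simp
    qed
    moreover have "min a b \<in> S" using ab by (simp add: min_def)
    ultimately show "u *\<^sub>R a + v *\<^sub>R b \<in> S" using S_up by blast
  qed
  define v where "v l = g (xl l)" for l
  have v_conv: "convex_on S v"
  proof (rule convex_onI[OF _ S_conv])
    fix t l1 l2 :: real assume t: "0 < t" "t < 1" and l: "l1 \<in> S" "l2 \<in> S"
    define L where "L = (1 - t) *\<^sub>R l1 + t *\<^sub>R l2"
    have LS: "L \<in> S" unfolding L_def using convexD[OF S_conv l, of "1 - t" t] t by simp
    define p1 where "p1 = xl l1"
    define p2 where "p2 = xl l2"
    have p1: "p1 \<in> X" "f p1 \<le> l1" and p2: "p2 \<in> X" "f p2 \<le> l2"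
      using ex[OF l(1)] ex[OF l(2)] unfolding p1_def p2_def K_def by auto
    define z where "z = (1 - t) *\<^sub>R p1 + t *\<^sub>R p2"
    have zX: "z \<in> X" unfolding z_def by (rule convexD[OF X_convex p1(1) p2(1)]) (use t in auto)
    have "f z \<le> (1 - t) * f p1 + t * f p2" unfolding z_def
      by (rule convex_onD[OF f_convex]) (use p1 p2 t in auto)
    also have "\<dots> \<le> (1 - t) * l1 + t * l2"
      using p1(2) p2(2) t by (intro add_mono mult_left_mono) auto
    finally have "z \<in> K L" using zX unfolding K_def L_def by simp
    then have "v L \<le> g z" using ex[OF LS] unfolding v_def by blast
    also have "g z \<le> (1 - t) * g p1 + t * g p2 - m / 2 * t * (1 - t) * (N (p2 - p1))\<^sup>2"
      unfolding z_def by (rule SC[OF p1(1) p2(1)]) (use t in auto)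
    also have "\<dots> \<le> (1 - t) * g p1 + t * g p2"
      using mM(1) t by (simp add: mult_nonneg_nonneg)
    finally show "v ((1 - t) *\<^sub>R l1 + t *\<^sub>R l2) \<le> (1 - t) * v l1 + t * v l2"
      unfolding v_def p1_def p2_def L_def by simp
  qed
  have vc: "continuous_on S v" by (rule convex_on_continuous[OF S_open v_conv])
  have key0: "m / 4 * (N (xl l - xl l'))\<^sup>2 \<le> v l - v l'" if ll: "l \<in> S" "l' \<in> S" "l \<le> l'" for l l'
  proof -
    have "xl l \<in> K l'" using ex[OF ll(1)] ll(3) unfolding K_def by auto
    from Q[OF ll(2) this] show ?thesis unfolding v_def by simp
  qed
  have key: "c\<^sup>2 * (m / 4) * (norm (xl l - xl l'))\<^sup>2 \<le> \<bar>v l - v l'\<bar>" if ll: "l \<in> S" "l' \<in> S" for l l'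
  proof -
    have "m / 4 * (N (xl l - xl l'))\<^sup>2 \<le> \<bar>v l - v l'\<bar>"
    proof (cases "l \<le> l'")
      case True then show ?thesis using key0[OF ll True] by linarith
    next
      case False
      then have "m / 4 * (N (xl l' - xl l))\<^sup>2 \<le> v l' - v l" using key0[OF ll(2,1)] by simp
      then show ?thesis by (subst Nsym) linarith
    qed
    moreover have "(c * norm (xl l - xl l'))\<^sup>2 \<le> (N (xl l - xl l'))\<^sup>2"
      using c by (intro power_mono) auto
    then have "m / 4 * (c * norm (xl l - xl l'))\<^sup>2 \<le> m / 4 * (N (xl l - xl l'))\<^sup>2"
      using mM(1) by (intro mult_left_mono) auto
    ultimately show ?thesis by (simp add: power_mult_distrib algebra_simps)
  qed
  have xlc: "continuous_on S xl" unfolding continuous_on_iff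
  proof (intro ballI allI impI)
    fix l e assume lS: "l \<in> S" and e: "(0::real) < e"
    define e' where "e' = c\<^sup>2 * (m / 4) * e\<^sup>2"
    have e': "e' > 0" unfolding e'_def using c(1) mM(1) e by simp
    obtain d where d: "d > 0" "\<And>l'. l' \<in> S \<Longrightarrow> dist l' l < d \<Longrightarrow> dist (v l') (v l) < e'"
      using vc lS e' unfolding continuous_on_iff by metis
    show "\<exists>d>0. \<forall>l'\<in>S. dist l' l < d \<longrightarrow> dist (xl l') (xl l) < e"
    proof (rule exI[of _ d], intro conjI ballI impI)
      fix l' assume l'S: "l' \<in> S" and dl: "dist l' l < d"
      have "c\<^sup>2 * (m / 4) * (norm (xl l' - xl l))\<^sup>2 < c\<^sup>2 * (m / 4) * e\<^sup>2"
        using key[OF l'S lS] d(2)[OF l'S dl] unfolding e'_def by (simp add: dist_real_def)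
      moreover have "c\<^sup>2 * (m / 4) > 0" using c(1) mM(1) by simp
      ultimately have "(norm (xl l' - xl l))\<^sup>2 < e\<^sup>2" using mult_less_cancel_left_pos by blast
      then have "norm (xl l' - xl l) < e" by (rule power2_less_imp_less) (use e in auto)
      then show "dist (xl l') (xl l) < e" by (simp add: dist_norm)
    qed (fact d(1))
  qed
  have dncont: "continuous_on UNIV (dual_norm N)" using dual_norm_props(2)[OF norm] .
  have xlS: "xl ` S \<subseteq> X" using xlX by blast
  have num: "continuous_on S (\<lambda>l. dual_norm N (gPhi x0 - gPhi (xl l)))"
    by (rule continuous_on_compose2[OF dncont _ subset_UNIV])
       (intro continuous_on_diff continuous_on_const continuous_on_compose2[OF gPhi_cont xlc xlS])
  have den: "continuous_on S (\<lambda>l. dual_norm N (gf (xl l)))"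
    by (rule continuous_on_compose2[OF dncont _ subset_UNIV])
       (rule continuous_on_compose2[OF gf_cont xlc xlS])
  show ?thesis unfolding S_def[symmetric]
  proof (cases "\<forall>y\<in>X. f x0 \<le> f y")
    case True
    have "xl l = x0" if lS: "l \<in> S" for l
    proof -
      obtain w where "w \<in> X" "f w < l" using lS unfolding S_def by blast
      then have "x0 \<in> K l" using True x0_in unfolding K_def by force
      then have "g (xl l) \<le> 0" using ex[OF lS] g0 by force
      moreover have "m / 2 * (N (xl l - x0))\<^sup>2 \<le> g (xl l)" using g_lower[OF xlX[OF lS]] .
      ultimately have "m / 2 * (N (xl l - x0))\<^sup>2 \<le> 0" by linarith
      then have "N (xl l - x0) = 0" using mM(1)
        by (smt (verit) divide_pos_pos mult_pos_pos zero_less_power2 isnorm_basic(4)[OF norm])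
      then show ?thesis using norm unfolding is_norm_def by simp
    qed
    then show "continuous_on S (\<lambda>l. dual_norm N (gPhi x0 - gPhi (xl l)) / dual_norm N (gf (xl l)))"
      by (intro continuous_on_cong[THEN iffD1, OF refl _ continuous_on_const
          [of S "dual_norm N (gPhi x0 - gPhi x0) / dual_norm N (gf x0)"]]) simp
  next
    case False
    then obtain w0 where w0: "w0 \<in> X" "f w0 < f x0" by (auto simp: not_le)
    have nz: "gf (xl l) \<noteq> 0" if lS: "l \<in> S" for l
    proof
      assume g0': "gf (xl l) = 0"
      define p where "p = xl l"
      have pX: "p \<in> X" and pK: "p \<in> K l" and pmin: "\<forall>y\<in>K l. g p \<le> g y"
        using ex[OF lS] xlX[OF lS] unfolding p_def by auto
      have fmin: "f p \<le> f y" if "y \<in> X" for y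
        using convex_tangent[OF f_convex pX that f_deriv[OF pX]] g0' unfolding p_def by simp
      have "p \<noteq> x0" using fmin[OF w0(1)] w0(2) by auto
      then have "N (p - x0) > 0" using norm unfolding is_norm_def by (metis less_eq_real_def right_minus_eq)
      then have gp: "g p > 0" using g_lower[OF pX] mM(1)
        by (smt (verit) divide_pos_pos mult_pos_pos zero_less_power2)
      obtain w where w: "w \<in> X" "f w < l" using lS unfolding S_def by blast
      have lp: "f p < l" using fmin[OF w(1)] w(2) by linarith
      define D where "D = f x0 - f p"
      have D: "D \<ge> 0" unfolding D_def using fmin[OF x0_in] by simp
      define t where "t = min (1/2) ((l - f p) / (D + 1))"
      have t: "0 < t" "t \<le> 1/2"
      proof -
        have "(l - f p) / (D + 1) > 0" using lp D by simp
        then show "0 < t" unfolding t_def by simp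
        show "t \<le> 1/2" unfolding t_def by (rule min.cobounded1)
      qed
      have tD: "t * D \<le> l - f p"
      proof -
        have "t * D \<le> (l - f p) / (D + 1) * D" unfolding t_def using D by (intro mult_right_mono) auto
        also have "\<dots> \<le> l - f p" using D lp by (simp add: field_simps)
        finally show ?thesis .
      qed
      define z where "z = (1 - t) *\<^sub>R p + t *\<^sub>R x0"
      have zX: "z \<in> X" unfolding z_def by (rule convexD[OF X_convex pX x0_in]) (use t in auto)
      have "f z \<le> (1 - t) * f p + t * f x0" unfolding z_def
        by (rule convex_onD[OF f_convex]) (use pX x0_in t in auto)
      also have "\<dots> = f p + t * D" unfolding D_def by (simp add: algebra_simps)
      also have "\<dots> \<le> l" using tD by simp
      finally have "z \<in> K l" using zX unfolding K_def by simp
      then have "g p \<le> g z" using pmin by blast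
      also have "g z \<le> (1 - t) * g p + t * g x0 - m / 2 * t * (1 - t) * (N (x0 - p))\<^sup>2"
        unfolding z_def by (rule SC[OF pX x0_in]) (use t in auto)
      also have "\<dots> \<le> (1 - t) * g p" using g0 mM(1) t by (simp add: mult_nonneg_nonneg)
      finally show False using gp t by (smt (verit) mult_less_cancel_right2)
    qed
    have "dual_norm N (gf (xl l)) \<noteq> 0" if "l \<in> S" for l
      using dual_norm_props(1)[OF norm nz[OF that]] by simp
    then show "continuous_on S (\<lambda>l. dual_norm N (gPhi x0 - gPhi (xl l)) / dual_norm N (gf (xl l)))"
      by (intro continuous_on_divide num den) auto
  qed
qed

end
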